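(* Let $p$ be a prime and let $q$ be an integer with $\gcd(q,p)=1$. For $n\geq 1$ let $\Gamma_{p,n,q}$ be the directed graph with vertex set $\mathbb{Z}_{p^n}=\{0,1,\dots,p^n-1\}$ and edge set $$E=\{(x,\, q^y \bmod p^n)\;:\; x\in\mathbb{Z}_{p^n},\ y\in\mathbb{Z}_{\geq 0},\ y\equiv x \pmod{p^n}\},$$ and let $A_n$ be its adjacency matrix, with rows and columns indexed by $0,1,\dots,p^n-1$ in increasing order. Then: (1) If $q$ is a primitive root modulo $p$, then $A_1$ is the $p\times p$ matrix whose first column (index $0$) is zero and all of whose other entries equal $1$. If $q$ is not a primitive root modulo $p$, then $A_1$ is obtained from this matrix by changing some entries $1$ to $0$. (2) For $n>1$, writing $A_n$ in $p\times p$ block form with blocks of size $p^{n-1}\times p^{n-1}$ (block $b\in\{0,\dots,p-1\}$ corresponding to indices $bp^{n-1},\dots,(b+1)p^{n-1}-1$), there exist matrices $B_1^n,\dots,B_p^n\in\mathrm{Mat}_{p^{n-1}\times p^{n-1}}(\mathbb{Z})$ such that $$A_n=\begin{pmatrix} B_1^n & B_2^n &\dots & B_p^n \\ B_1^n & B_2^n &\dots & B_p^n \\ \vdots &\vdots & &\vdots \\ B_1^n & B_2^n &\dots & B_p^n \end{pmatrix}$$ (every block row is the same) and $B_1^n+B_2^n+\dots+B_p^n=A_{n-1}$.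
   Context: Here $q^y \bmod p^n$ denotes the representative of $q^y$ modulo $p^n$ in $\{0,1,\dots,p^n-1\}$. The adjacency matrix has entry $1$ in position $(x,z)$ if $(x,z)$ is an edge and $0$ otherwise. *)

theory Defs
  imports "HOL-Number_Theory.Number_Theory"
begin

definition gamma_edge :: "nat \<Rightarrow> nat \<Rightarrow> int \<Rightarrow> nat \<Rightarrow> nat \<Rightarrow> bool" where
  "gamma_edge p n q x z \<longleftrightarrow> x < p ^ n \<and>
     (\<exists>y::nat. [y = x] (mod p ^ n) \<and> int z = q ^ y mod int (p ^ n))"

definition adj :: "nat \<Rightarrow> nat \<Rightarrow> int \<Rightarrow> nat \<Rightarrow> nat \<Rightarrow> int" where
  "adj p n q x z = (if gamma_edge p n q x z then 1 else 0)"

definition is_primroot_int :: "nat \<Rightarrow> int \<Rightarrow> bool" where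
  "is_primroot_int p q \<longleftrightarrow> residue_primroot p (nat (q mod int p))"

end

theory Submission imports Defs begin

lemma powmod_int:
  fixes q :: int and M :: nat
  assumes "M > 0"
  shows "q ^ y mod int M = int (nat (q mod int M) ^ y mod M)"
proof -
  have "int (nat (q mod int M)) = q mod int M" using assms by simp
  hence "int (nat (q mod int M) ^ y mod M) = (q mod int M) ^ y mod int M"
    by (metis of_nat_mod of_nat_power)
  also have "\<dots> = q ^ y mod int M" by (simp add: power_mod)
  finally show ?thesis by simp
qed

lemma euler_int:
  fixes q :: int and M :: nat
  assumes "coprime q (int M)" "M > 0"
  shows "[q ^ totient M = 1] (mod int M)"
proof -
  define Q where "Q = nat (q mod int M)"
  have Qi: "int Q = q mod int M" using assms unfolding Q_def by simp
  have "coprime (q mod int M) (int M)" using assms by simp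
  hence "coprime (int Q) (int M)" using Qi by simp
  hence "coprime Q M" by simp
  hence "[Q ^ totient M = 1] (mod M)" by (rule euler_theorem)
  hence "[int Q ^ totient M = 1] (mod int M)" using cong_int_iff by (metis of_nat_1 of_nat_power)
  moreover have "[int Q = q] (mod int M)" using Qi by (simp add: cong_def)
  ultimately show ?thesis by (metis cong_pow cong_sym cong_trans)
qed

lemma lift:
  fixes w :: int and m p :: nat
  assumes "prime p" "p dvd m" "[w = 1] (mod int m)"
  shows "[w ^ p = 1] (mod int (p * m))"
proof -
  have d1: "int m dvd (w - 1)" using assms(3) by (simp add: cong_iff_dvd_diff)
  have wp: "[w = 1] (mod int p)" using assms(2,3) by (meson cong_dvd_modulus int_dvd_int_iff)
  have "[(\<Sum>i<p. w ^ i) = (\<Sum>i<p. 1)] (mod int p)"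
    by (rule cong_sum) (metis wp cong_pow power_one)
  hence "[(\<Sum>i<p. w ^ i) = 0] (mod int p)" by (simp add: cong_def)
  hence "int p dvd (\<Sum>i<p. w ^ i)" by (simp add: cong_0_iff)
  hence "int (p*m) dvd (w - 1) * (\<Sum>i<p. w ^ i)" using d1 by (simp add: mult_dvd_mono mult.commute)
  thus ?thesis by (simp add: power_diff_1_eq cong_iff_dvd_diff)
qed


definition Ed :: "nat \<Rightarrow> nat \<Rightarrow> int \<Rightarrow> nat \<Rightarrow> nat \<Rightarrow> bool" where
  "Ed p n q x z \<longleftrightarrow> (\<exists>y::nat. [y = x] (mod p ^ n) \<and> int z = q ^ y mod int (p ^ n))"

lemma gamma_Ed: "gamma_edge p n q x z \<longleftrightarrow> x < p ^ n \<and> Ed p n q x z"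
  by (simp add: gamma_edge_def Ed_def)

lemma K:
  assumes "prime p" "coprime q (int p)" "n \<ge> 1"
  shows "[q ^ (p ^ (n - 1) * (p - 1)) = 1] (mod int (p ^ n))"
proof -
  have "coprime q (int (p ^ n))" using assms(2) by simp
  moreover have "p ^ n > 0" using assms(1) by (simp add: prime_gt_0_nat)
  ultimately have "[q ^ totient (p ^ n) = 1] (mod int (p ^ n))" by (rule euler_int)
  thus ?thesis using totient_prime_power[OF assms(1)] assms(3) by simp
qed

lemma shift_down:
  assumes "prime p" "coprime q (int p)" "n \<ge> 1" "Ed p n q (x + p ^ (n - 1)) z"
  shows "Ed p n q x z"
proof -
  define m where "m = p ^ (n - 1)"
  have pn: "p ^ n = p * m" using assms(3) unfolding m_def by (cases n) auto
  obtain y where y: "[y = x + m] (mod p ^ n)" "int z = q ^ y mod int (p ^ n)"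
    using assms(4) unfolding Ed_def m_def by blast
  obtain r where r: "p = Suc r" using assms(1) by (cases p) auto
  have "[y + m * (p - 1) = x + m + m * (p - 1)] (mod p ^ n)" using y(1) by (simp add: cong_add)
  moreover have "x + m + m * (p - 1) = x + p ^ n" using r pn by simp
  moreover have "[x + p ^ n = x] (mod p ^ n)" by (simp add: cong_def)
  ultimately have c: "[y + m * (p - 1) = x] (mod p ^ n)"
    by (metis cong_trans)
  have "[q ^ (y + m * (p - 1)) = q ^ y * 1] (mod int (p ^ n))"
    unfolding power_add using K[OF assms(1-3)] unfolding m_def by (intro cong_mult cong_refl)
  hence "int z = q ^ (y + m * (p - 1)) mod int (p ^ n)" using y(2) by (simp add: cong_def)
  thus ?thesis unfolding Ed_def using c by blast
qed

lemma pow_period: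
  fixes q :: int
  assumes "[q ^ e = 1] (mod N)"
  shows "[q ^ (y + e * k) = q ^ y] (mod N)"
proof -
  have "[(q ^ e) ^ k = 1 ^ k] (mod N)" using assms by (rule cong_pow)
  hence "[q ^ y * (q ^ e) ^ k = q ^ y * 1] (mod N)" by (intro cong_mult cong_refl) simp
  thus ?thesis by (simp add: power_add power_mult)
qed

lemma shift_up:
  assumes "prime p" "coprime q (int p)" "n \<ge> 1" "Ed p n q x z"
  shows "Ed p n q (x + p ^ (n - 1)) z"
proof -
  define m where "m = p ^ (n - 1)"
  have pn: "p ^ n = p * m" using assms(3) unfolding m_def by (cases n) auto
  obtain y where y: "[y = x] (mod p ^ n)" "int z = q ^ y mod int (p ^ n)"
    using assms(4) unfolding Ed_def m_def by blast
  obtain s where r: "p = Suc (Suc s)" using assms(1)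
    by (metis One_nat_def not0_implies_Suc not_prime_0 not_prime_1)
  define y' where "y' = y + (m * (p - 1)) * (p - 1)"
  have e: "y' = y + m + p ^ n * s" unfolding y'_def pn by (simp add: r algebra_simps)
  have "[y' = x + m + p ^ n * s] (mod p ^ n)" unfolding e using y(1) by (intro cong_add cong_refl)
  moreover have "[x + m + p ^ n * s = x + m] (mod p ^ n)" by (simp add: cong_def)
  ultimately have c: "[y' = x + m] (mod p ^ n)" by (metis cong_trans)
  have "[q ^ y' = q ^ y] (mod int (p ^ n))" unfolding y'_def
    by (rule pow_period) (use K[OF assms(1-3)] in \<open>simp add: m_def\<close>)
  hence "int z = q ^ y' mod int (p ^ n)" using y(2) by (simp add: cong_def)
  thus ?thesis unfolding Ed_def using c m_def by blast
qed

lemma shift_a: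
  assumes "prime p" "coprime q (int p)" "n \<ge> 1"
  shows "Ed p n q (a * p ^ (n - 1) + x) z \<longleftrightarrow> Ed p n q x z"
proof (induction a)
  case 0 then show ?case by simp
next
  case (Suc a)
  have "Ed p n q (Suc a * p ^ (n - 1) + x) z \<longleftrightarrow> Ed p n q (a * p ^ (n - 1) + x) z"
    using shift_up[OF assms, of "a * p ^ (n - 1) + x" z] shift_down[OF assms, of "a * p ^ (n - 1) + x" z]
    by (auto simp: algebra_simps)
  then show ?case using Suc by simp
qed


lemma Ed_exist:
  assumes "prime p" "coprime q (int p)" "n \<ge> 2" "i < p ^ (n - 1)" "j < p ^ (n - 1)"
    "Ed p (n - 1) q i j"
  shows "\<exists>b<p. Ed p n q i (b * p ^ (n - 1) + j)"
proof -
  define m where "m = p ^ (n - 1)"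
  have pn: "p ^ n = p * m" using assms(3) unfolding m_def by (cases n) auto
  have m0: "m > 0" using assms(1) unfolding m_def by (simp add: prime_gt_0_nat)
  obtain r where r: "p = Suc r" using assms(1) by (cases p) auto
  obtain y where y: "[y = i] (mod m)" "int j = q ^ y mod int m"
    using assms(6) unfolding Ed_def m_def by blast
  have ym: "y mod m = i" using y(1) assms(4) unfolding cong_def m_def by simp
  define s where "s = y div m"
  have ys: "y = m * s + i" using ym unfolding s_def by (metis div_mult_mod_eq mult.commute)
  define y' where "y' = y + (m * (p - 1)) * s"
  have y'e: "y' = i + p ^ n * s" unfolding y'_def pn ys by (simp add: r algebra_simps)
  have c: "[y' = i] (mod p ^ n)" unfolding y'e by (simp add: cong_def)
  have per: "[q ^ y' = q ^ y] (mod int (p ^ n))" unfolding y'_def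
    by (rule pow_period) (use K[OF assms(1,2)] assms(3) in \<open>simp add: m_def\<close>)
  define z where "z = nat (q ^ y mod int (p ^ n))"
  have N0: "p ^ n > 0" using pn m0 r by simp
  have zi: "int z = q ^ y mod int (p ^ n)" unfolding z_def using N0 by simp
  hence zi': "int z = q ^ y' mod int (p ^ n)" using per by (simp add: cong_def)
  have zN: "z < p * m" using zi N0 pn
    by (metis of_nat_less_iff of_nat_0_less_iff pos_mod_bound)
  have "int (z mod m) = (q ^ y mod int (p ^ n)) mod int m" using zi by (simp add: of_nat_mod)
  also have "\<dots> = q ^ y mod int m" unfolding pn by (simp add: mod_mod_cancel)
  finally have zm: "z mod m = j" using y(2) by simp
  define b where "b = z div m"
  have zb: "z = b * m + j" unfolding b_def using zm by (metis div_mult_mod_eq)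
  have "b < p" unfolding b_def using zN m0 by (simp add: div_less_iff_less_mult)
  moreover have "Ed p n q i (b * m + j)" unfolding Ed_def using c zi' zb by metis
  ultimately show ?thesis unfolding m_def by blast
qed

lemma Ed_down:
  assumes "prime p" "n \<ge> 2" "j < p ^ (n - 1)" "Ed p n q i (b * p ^ (n - 1) + j)"
  shows "Ed p (n - 1) q i j"
proof -
  define m where "m = p ^ (n - 1)"
  have pn: "p ^ n = p * m" using assms(2) unfolding m_def by (cases n) auto
  obtain y where y: "[y = i] (mod p ^ n)" "int (b * m + j) = q ^ y mod int (p ^ n)"
    using assms(4) unfolding Ed_def m_def by blast
  have c: "[y = i] (mod m)" using y(1) unfolding pn by (meson cong_dvd_modulus_nat dvd_triv_right)
  have "int (b * m + j) mod int m = q ^ y mod int m" using y(2) unfolding pn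
    by (simp add: mod_mod_cancel)
  moreover have "int (b * m + j) mod int m = int j" using assms(3) unfolding m_def
    by (metis mod_mult_self3 mod_less of_nat_mod)
  ultimately show ?thesis unfolding Ed_def m_def using c by (metis m_def)
qed


lemma Ed_unique_aux:
  assumes "prime p" "coprime q (int p)" "n \<ge> 2" "j < p ^ (n - 1)" "y1 \<le> y2"
    "[y1 = i] (mod p ^ n)" "[y2 = i] (mod p ^ n)"
    "int (b1 * p ^ (n - 1) + j) = q ^ y1 mod int (p ^ n)"
    "int (b2 * p ^ (n - 1) + j) = q ^ y2 mod int (p ^ n)"
  shows "b1 = b2"
proof -
  define m where "m = p ^ (n - 1)"
  have pn: "p ^ n = p * m" using assms(3) unfolding m_def by (cases n) auto
  have m0: "m > 0" using assms(1) unfolding m_def by (simp add: prime_gt_0_nat)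
  have pm: "p dvd m" unfolding m_def using assms(3) by (cases "n - 1") auto
  have "[y2 = y1] (mod p ^ n)" using assms(6,7) by (metis cong_sym cong_trans)
  then obtain k where k: "y2 = k * p ^ n + y1" using cong_le_nat[OF assms(5)] by blast
  define w where "w = q ^ (k * p ^ n)"
  have qy2: "q ^ y2 = q ^ y1 * w" unfolding w_def k by (simp add: power_add mult.commute)
  have red: "q ^ y mod int m = int j" if "int (b * m + j) = q ^ y mod int (p ^ n)" for b y
  proof -
    have "int (b * m + j) mod int m = q ^ y mod int m" using that unfolding pn
      by (simp add: mod_mod_cancel)
    moreover have "int (b * m + j) mod int m = int j" using assms(4) unfolding m_def
      by (metis mod_mult_self3 mod_less of_nat_mod)
    ultimately show ?thesis by simp
  qed
  have "[q ^ y1 * w = q ^ y1 * 1] (mod int m)"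
    using red[OF assms(8)[folded m_def]] red[OF assms(9)[folded m_def]] qy2
    by (simp add: cong_def)
  moreover have "coprime (q ^ y1) (int m)" using assms(2) unfolding m_def by simp
  ultimately have w1: "[w = 1] (mod int m)" using cong_mult_lcancel by blast
  have wp: "[w ^ p = 1] (mod int (p ^ n))" unfolding pn by (rule lift[OF assms(1) pm w1])
  obtain s where s: "p = Suc s" using assms(1) by (cases p) auto
  have "w ^ (p - 1) = q ^ (0 + (m * (p - 1)) * (p * k))" unfolding w_def pn
    by (simp add: power_mult[symmetric] algebra_simps)
  also have "[\<dots> = q ^ 0] (mod int (p ^ n))"
    by (rule pow_period) (use K[OF assms(1,2)] assms(3) in \<open>simp add: m_def\<close>)
  finally have wp1: "[w ^ (p - 1) = 1] (mod int (p ^ n))" by simp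
  have "w ^ p = w * w ^ (p - 1)" using s by simp
  hence "[w ^ p = w * 1] (mod int (p ^ n))" using wp1 by (metis cong_mult cong_refl)
  hence "[w = 1] (mod int (p ^ n))" using wp by (metis cong_sym cong_trans mult_1_right)
  hence "[q ^ y2 = q ^ y1 * 1] (mod int (p ^ n))" unfolding qy2 by (intro cong_mult cong_refl)
  hence "int (b1 * m + j) = int (b2 * m + j)" using assms(8,9) unfolding m_def cong_def by simp
  thus ?thesis using m0 by simp
qed

lemma Ed_unique:
  assumes "prime p" "coprime q (int p)" "n \<ge> 2" "j < p ^ (n - 1)"
    "Ed p n q i (b1 * p ^ (n - 1) + j)" "Ed p n q i (b2 * p ^ (n - 1) + j)"
  shows "b1 = b2"
proof -
  obtain y1 where y1: "[y1 = i] (mod p ^ n)" "int (b1 * p ^ (n - 1) + j) = q ^ y1 mod int (p ^ n)"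
    using assms(5) unfolding Ed_def by blast
  obtain y2 where y2: "[y2 = i] (mod p ^ n)" "int (b2 * p ^ (n - 1) + j) = q ^ y2 mod int (p ^ n)"
    using assms(6) unfolding Ed_def by blast
  show ?thesis
  proof (cases "y1 \<le> y2")
    case True show ?thesis using Ed_unique_aux[OF assms(1-4) True y1(1) y2(1) y1(2) y2(2)] by simp
  next
    case False
    hence "y2 \<le> y1" by simp
    thus ?thesis using Ed_unique_aux[OF assms(1-4) _ y2(1) y1(1) y2(2) y1(2)] by simp
  qed
qed


lemma P0:
  assumes "prime p" "coprime q (int p)"
  shows "\<not> Ed p 1 q x 0"
proof
  assume "Ed p 1 q x 0"
  then obtain y where "int p dvd q ^ y" unfolding Ed_def by (auto simp: mod_eq_0_iff_dvd)
  moreover have "coprime (q ^ y) (int p)" using assms(2) by simp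
  ultimately have "is_unit (int p)" by (meson coprime_common_divisor dvd_refl)
  thus False using assms(1) by simp
qed

lemma Qcop:
  assumes "prime p" "coprime q (int p)"
  shows "coprime (nat (q mod int p)) p"
proof -
  have p0: "p > 0" using assms(1) by (simp add: prime_gt_0_nat)
  define Q where "Q = nat (q mod int p)"
  have Qi: "int Q = q mod int p" using p0 unfolding Q_def by simp
  have "coprime (q mod int p) (int p)" using assms(2) p0 by simp
  hence "coprime (int Q) (int p)" using Qi by simp
  hence "coprime Q p" by simp
  thus ?thesis unfolding Q_def .
qed

lemma P1:
  assumes "prime p" "coprime q (int p)" "is_primroot_int p q" "0 < z" "z < p"
  shows "Ed p 1 q x z"
proof -
  define Q where "Q = nat (q mod int p)"
  have p1: "p > 1" using assms(1) prime_gt_1_nat by blast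
  have rp: "residue_primroot p Q" using assms(3) unfolding is_primroot_int_def Q_def .
  have "coprime z p" using assms(1,4,5)
    by (metis coprime_commute not_less prime_imp_coprime_nat dvd_imp_le)
  hence "z \<in> totatives p" using assms(4,5) by (simp add: totatives_def)
  hence "z \<in> (\<lambda>i. Q ^ i mod p) ` {..<totient p}"
    using residue_primroot_is_generator[OF p1 rp] unfolding bij_betw_def by simp
  then obtain k where k: "Q ^ k mod p = z" by auto
  obtain s where s: "p = Suc (Suc s)" using assms(1)
    by (metis One_nat_def not0_implies_Suc not_prime_0 not_prime_1)
  define y where "y = x + p * (k + (p - 2) * x)"
  have ye: "y = k + (p - 1) * (k + (p - 1) * x)" unfolding y_def s by (simp add: algebra_simps)
  have c: "[y = x] (mod p)" unfolding y_def by (simp add: cong_def)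
  have "[q ^ (p - 1) = 1] (mod int p)" using euler_int[OF assms(2)] p1 totient_prime[OF assms(1)]
    by simp
  hence "[q ^ y = q ^ k] (mod int p)" unfolding ye by (rule pow_period)
  hence "q ^ y mod int p = q ^ k mod int p" by (simp add: cong_def)
  also have "\<dots> = int z" using powmod_int[of p q k] p1 k unfolding Q_def by simp
  finally show ?thesis unfolding Ed_def using c by auto
qed

lemma P2:
  assumes "prime p" "coprime q (int p)" "\<not> is_primroot_int p q"
  shows "\<exists>z<p. z \<noteq> 0 \<and> \<not> Ed p 1 q 0 z"
proof -
  define Q where "Q = nat (q mod int p)"
  have p1: "p > 1" using assms(1) prime_gt_1_nat by blast
  obtain g where "residue_primroot p g" using prime_primitive_root_exists[OF p1 assms(1)] by blast
  define z where "z = g mod p"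
  have rz: "residue_primroot p z" unfolding z_def using \<open>residue_primroot p g\<close> by simp
  have z0: "z \<noteq> 0"
  proof
    assume "z = 0" with rz have "p = 1" by simp
    with p1 show False by simp
  qed
  have zp: "z < p" unfolding z_def using p1 by simp
  have "\<not> Ed p 1 q 0 z"
  proof
    assume "Ed p 1 q 0 z"
    then obtain y where "int z = q ^ y mod int p" unfolding Ed_def by auto
    hence "int z = int (Q ^ y mod p)" using powmod_int[of p q y] p1 unfolding Q_def by simp
    hence zq: "[Q ^ y = z] (mod p)" using zp by (simp add: cong_def)
    have cQ: "coprime Q p" unfolding Q_def by (rule Qcop[OF assms(1,2)])
    have "[Q ^ ord p Q = 1] (mod p)" using ord_works by blast
    hence "[(Q ^ ord p Q) ^ y = 1] (mod p)" by (metis cong_pow power_one)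
    hence "[(Q ^ y) ^ ord p Q = 1] (mod p)" by (simp add: power_mult[symmetric] mult.commute)
    hence "[z ^ ord p Q = 1] (mod p)" using zq by (metis cong_pow cong_sym cong_trans)
    hence d1: "ord p z dvd ord p Q" by (simp add: ord_divides')
    have "[Q ^ totient p = 1] (mod p)" using cQ by (rule euler_theorem)
    hence d2: "ord p Q dvd totient p" by (simp add: ord_divides')
    have "ord p z = totient p" using rz by (simp add: residue_primroot_def)
    hence "ord p Q = totient p" using d1 d2 by (simp add: dvd_antisym)
    hence "residue_primroot p Q" using cQ p1 by (simp add: residue_primroot_def coprime_commute)
    thus False using assms(3) unfolding is_primroot_int_def Q_def by simp
  qed
  thus ?thesis using z0 zp by blast
qed


theorem lemma5:
  fixes p :: nat and q :: int
  assumes "prime p" and "coprime q (int p)"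
  shows "(is_primroot_int p q \<longrightarrow>
            (\<forall>x<p. \<forall>z<p. adj p 1 q x z = (if z = 0 then 0 else 1)))
       \<and> (\<not> is_primroot_int p q \<longrightarrow>
            (\<forall>x<p. \<forall>z<p. adj p 1 q x z \<le> (if z = 0 then 0 else 1))
            \<and> (\<exists>x<p. \<exists>z<p. adj p 1 q x z \<noteq> (if z = 0 then 0 else 1)))
       \<and> (\<forall>n>1. \<exists>B :: nat \<Rightarrow> nat \<Rightarrow> nat \<Rightarrow> int.
            (\<forall>a<p. \<forall>b<p. \<forall>i<p ^ (n - 1). \<forall>j<p ^ (n - 1).
               adj p n q (a * p ^ (n - 1) + i) (b * p ^ (n - 1) + j) = B b i j)
            \<and> (\<forall>i<p ^ (n - 1). \<forall>j<p ^ (n - 1).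
               (\<Sum>b<p. B b i j) = adj p (n - 1) q i j))"
proof -
  have adj1: "adj p 1 q x z = (if Ed p 1 q x z then 1 else 0)" if "x < p" for x z
    using that by (simp add: adj_def gamma_Ed)
  have z0: "adj p 1 q x 0 = 0" if "x < p" for x
    using adj1[OF that] P0[OF assms] by simp
  have h1: "\<forall>x<p. \<forall>z<p. adj p 1 q x z = (if z = 0 then 0 else 1)" if pr: "is_primroot_int p q"
  proof -
    show "\<forall>x<p. \<forall>z<p. adj p 1 q x z = (if z = 0 then 0 else 1)"
    proof (intro allI impI)
      fix x z assume "x < p" "z < p"
      thus "adj p 1 q x z = (if z = 0 then 0 else 1)"
        using adj1 z0 P1[OF assms pr, of z x] by auto
    qed
  qed
  have h2: "(\<forall>x<p. \<forall>z<p. adj p 1 q x z \<le> (if z = 0 then 0 else 1))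
            \<and> (\<exists>x<p. \<exists>z<p. adj p 1 q x z \<noteq> (if z = 0 then 0 else 1))"
    if npr: "\<not> is_primroot_int p q"
  proof
    show "\<forall>x<p. \<forall>z<p. adj p 1 q x z \<le> (if z = 0 then 0 else 1)"
      using adj1 z0 by auto
    show "\<exists>x<p. \<exists>z<p. adj p 1 q x z \<noteq> (if z = 0 then 0 else 1)"
    proof -
    obtain z where z: "z < p" "z \<noteq> 0" "\<not> Ed p 1 q 0 z" using P2[OF assms npr] by blast
    have p0: "0 < p" using assms(1) by (simp add: prime_gt_0_nat)
    show "\<exists>x<p. \<exists>z<p. adj p 1 q x z \<noteq> (if z = 0 then 0 else 1)"
      using z adj1[OF p0] by (intro exI[of _ 0] exI[of _ z]) (auto simp: p0)
    qed
  qed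
  have h3: "\<exists>B :: nat \<Rightarrow> nat \<Rightarrow> nat \<Rightarrow> int.
            (\<forall>a<p. \<forall>b<p. \<forall>i<p ^ (n - 1). \<forall>j<p ^ (n - 1).
               adj p n q (a * p ^ (n - 1) + i) (b * p ^ (n - 1) + j) = B b i j)
            \<and> (\<forall>i<p ^ (n - 1). \<forall>j<p ^ (n - 1).
               (\<Sum>b<p. B b i j) = adj p (n - 1) q i j)" if n1: "n > 1" for n
  proof -
  from n1 have n2: "n \<ge> 2" "n \<ge> 1" by auto
  define m where "m = p ^ (n - 1)"
  have pn: "p ^ n = p * m" using n2 unfolding m_def by (cases n) auto
  have lt: "a * m + i < p ^ n" if "a < p" "i < m" for a i
  proof -
    have "a * m + i < a * m + m" using that by simp
    also have "\<dots> = Suc a * m" by simp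
    also have "\<dots> \<le> p * m" using that(1) by (intro mult_right_mono) auto
    finally show ?thesis using pn by simp
  qed
  have m0: "0 < m" using assms(1) unfolding m_def by (simp add: prime_gt_0_nat)
  have p0: "0 < p" using assms(1) by (simp add: prime_gt_0_nat)
  define B where "B = (\<lambda>b i j. adj p n q i (b * m + j))"
  show "\<exists>B :: nat \<Rightarrow> nat \<Rightarrow> nat \<Rightarrow> int.
            (\<forall>a<p. \<forall>b<p. \<forall>i<p ^ (n - 1). \<forall>j<p ^ (n - 1).
               adj p n q (a * p ^ (n - 1) + i) (b * p ^ (n - 1) + j) = B b i j)
            \<and> (\<forall>i<p ^ (n - 1). \<forall>j<p ^ (n - 1).
               (\<Sum>b<p. B b i j) = adj p (n - 1) q i j)"
  proof (intro exI[of _ B] conjI allI impI)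
    fix a b i j assume ab: "a < p" "b < p" and ij: "i < p ^ (n - 1)" "j < p ^ (n - 1)"
    have "i < p ^ n" using lt[of 0 i] p0 ij unfolding m_def by simp
    thus "adj p n q (a * p ^ (n - 1) + i) (b * p ^ (n - 1) + j) = B b i j"
      unfolding B_def adj_def gamma_Ed m_def
      using lt[OF ab(1), of i] ij shift_a[OF assms n2(2), of a i] unfolding m_def by simp
  next
    fix i j assume ij: "i < p ^ (n - 1)" "j < p ^ (n - 1)"
    have ilt: "i < p ^ n" using lt[of 0 i] p0 ij unfolding m_def by simp
    have Bi: "B b i j = (if Ed p n q i (b * m + j) then 1 else 0)" for b
      unfolding B_def adj_def gamma_Ed using ilt by simp
    have R: "adj p (n - 1) q i j = (if Ed p (n - 1) q i j then 1 else 0)"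
      unfolding adj_def gamma_Ed using ij by simp
    show "(\<Sum>b<p. B b i j) = adj p (n - 1) q i j"
    proof (cases "Ed p (n - 1) q i j")
      case True
      then obtain b0 where b0: "b0 < p" "Ed p n q i (b0 * m + j)"
        using Ed_exist[OF assms n2(1) ij] unfolding m_def by blast
      have "B b i j = (if b = b0 then 1 else 0)" if "b < p" for b
      proof (cases "b = b0")
        case True thus ?thesis using Bi[of b] b0(2) by simp
      next
        case False
        have "\<not> Ed p n q i (b * m + j)"
        proof
          assume "Ed p n q i (b * m + j)"
          with b0(2) have "b = b0" using Ed_unique[OF assms n2(1) ij(2), of i b b0]
            by (simp add: m_def)
          with False show False by simp
        qed
        thus ?thesis using Bi[of b] False by simp
      qed
      hence "(\<Sum>b<p. B b i j) = (\<Sum>b<p. if b = b0 then 1 else 0)" by (intro sum.cong) auto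
      also have "\<dots> = 1" using b0 by simp
      finally show ?thesis using R True by simp
    next
      case False
      have "B b i j = 0" for b
      proof -
        have "\<not> Ed p n q i (b * m + j)"
          using Ed_down[OF assms(1) n2(1) ij(2), of q i b] False by (auto simp: m_def)
        thus ?thesis using Bi[of b] by simp
      qed
      thus ?thesis using R False by simp
    qed
  qed
  qed
  show ?thesis using h1 h2 h3 by blast
qed

end
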